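(* For every integer $k\ge 0$, $$B_{k}=(-1)^{k+1}\sum_{n=1}^{k+1}\frac{1}{n^2}\Delta_{n}(k+1),\qquad\text{where}\quad \Delta_{n}(m)=\sum_{j=1}^{n}(-1)^{j}\binom{n}{j}j^{m}.$$
   Context: The Bernoulli numbers $B_k$ are defined by the generating function $\frac{t}{e^{t}-1}=\sum_{k=0}^{\infty}\frac{B_k}{k!}t^k$ for $|t|<2\pi$ (so $B_1=-1/2$). *)

theory Defs
  imports "HOL-Analysis.Analysis"
begin

text \<open>The point t = 0 is excluded since
  in Isabelle t/(e^t-1) evaluates to 0 there (division by zero), whereas the
  generating function has value 1 by continuity.  The coefficient sequence is
  unique (identity theorem for power series), so THE is well-defined.\<close>
definition bernoulli_seq :: "nat \<Rightarrow> real" where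
  "bernoulli_seq = (THE b. \<forall>t::real. t \<noteq> 0 \<and> \<bar>t\<bar> < 2 * pi \<longrightarrow>
      (\<lambda>k. b k / fact k * t ^ k) sums (t / (exp t - 1)))"

definition bernoulli :: "nat \<Rightarrow> real" where
  "bernoulli k = bernoulli_seq k"

definition Delta :: "nat \<Rightarrow> nat \<Rightarrow> int" where
  "Delta n m = (\<Sum>j=1..n. (-1) ^ j * int (n choose j) * int j ^ m)"

end

theory Submission
  imports Defs "HOL-Complex_Analysis.Complex_Analysis"
begin

lemma pow_nth_below:
  fixes f :: "'a::comm_ring_1 fps"
  assumes "f $ 0 = 0" "k < n"
  shows "(f ^ n) $ k = 0"
proof -
  have "f = fps_X * fps_shift 1 f"
    using assms(1) by (intro fps_ext) (auto simp: fps_X_mult_nth)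
  hence "f ^ n = fps_X ^ n * (fps_shift 1 f) ^ n"
    by (metis power_mult_distrib)
  thus ?thesis using assms(2) by (simp add: fps_X_power_mult_nth)
qed

definition UU :: "complex fps" where "UU = 1 - fps_exp (-1)"

lemma UU0: "UU $ 0 = 0" by (simp add: UU_def)

lemma UU_pow_nth:
  assumes "m \<ge> 1"
  shows "(UU ^ n) $ m = (-1) ^ m * of_int (Delta n m) / fact m"
proof -
  have "UU ^ n = (- fps_exp (-1) + 1) ^ n" by (simp add: UU_def)
  also have "\<dots> = (\<Sum>j\<le>n. of_nat (n choose j) * (- fps_exp (-1)) ^ j * 1 ^ (n - j))"
    by (rule binomial_ring)
  also have "\<dots> = (\<Sum>j\<le>n. fps_const (of_nat (n choose j) * (-1) ^ j) * fps_exp (- of_nat j))"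
  proof (intro sum.cong refl)
    fix j assume "j \<in> {..n}"
    have "(- fps_exp (-1::complex)) ^ j = (-1) ^ j * fps_exp (- of_nat j)"
      by (subst power_minus) (simp only: fps_exp_power_mult mult_minus1_right)
    also have "(-1::complex fps) ^ j = fps_const ((-1) ^ j)"
      by (metis fps_const_neg fps_const_1_eq_1 fps_const_power)
    finally have e: "(- fps_exp (-1::complex)) ^ j = fps_const ((-1) ^ j) * fps_exp (- of_nat j)" .
    show "of_nat (n choose j) * (- fps_exp (-1)) ^ j * 1 ^ (n - j) =
          fps_const (of_nat (n choose j) * (-1) ^ j) * fps_exp (- of_nat j :: complex)"
      unfolding e by (simp only: power_one mult_1_right fps_of_nat [symmetric] fps_const_mult [symmetric] mult.assoc)
  qed
  finally have "(UU ^ n) $ m = (\<Sum>j\<le>n. of_nat (n choose j) * (-1) ^ j * (- of_nat j) ^ m / fact m)"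
    by (simp add: fps_sum_nth)
  also have "\<dots> = (\<Sum>j=1..n. of_nat (n choose j) * (-1) ^ j * (- of_nat j) ^ m / fact m)"
  proof -
    have "{..n} = insert 0 {1..n}" by auto
    thus ?thesis using assms by (simp add: zero_power)
  qed
  also have "\<dots> = (-1) ^ m * of_int (Delta n m) / fact m"
    unfolding Delta_def of_int_sum sum_divide_distrib sum_distrib_left
    by (intro sum.cong refl) (simp add: power_minus[of "of_nat _"] mult_ac)
  finally show ?thesis .
qed

definition cc :: "nat \<Rightarrow> complex" where
  "cc k = (-1) ^ (k+1) * (\<Sum>n=1..k+1. of_int (Delta n (k+1)) / (of_nat n)^2)"

definition CC :: "complex fps" where "CC = Abs_fps (\<lambda>k. cc k / fact k)"
definition LL :: "complex fps" where
  "LL = Abs_fps (\<lambda>m. if m = 0 then 0 else cc (m-1) / fact m)"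
definition PP :: "nat \<Rightarrow> complex fps" where
  "PP M = (\<Sum>n=1..M. fps_const (1 / (of_nat n)^2) * UU ^ n)"
definition QQ :: "nat \<Rightarrow> complex fps" where
  "QQ M = (\<Sum>n=1..M. fps_const (1 / of_nat n) * UU ^ n)"

lemma deriv_LL: "fps_deriv LL = CC"
proof (rule fps_ext)
  fix k
  have "fact (Suc k) = (of_nat (Suc k) :: complex) * fact k" by simp
  thus "fps_deriv LL $ k = CC $ k"
    by (simp add: LL_def CC_def field_simps del: of_nat_Suc)
qed

lemma LL_PP: assumes "m \<le> M" shows "LL $ m = PP M $ m"
proof (cases "m = 0")
  case True
  thus ?thesis by (simp add: LL_def PP_def fps_sum_nth pow_nth_below[OF UU0])
next
  case False
  have "PP M $ m = (\<Sum>n=1..M. (UU ^ n) $ m / (of_nat n)^2)"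
    by (simp add: PP_def fps_sum_nth)
  also have "\<dots> = (\<Sum>n=1..m. (UU ^ n) $ m / (of_nat n)^2)"
  proof (rule sum.mono_neutral_right)
    show "\<forall>i\<in>{1..M} - {1..m}. UU ^ i $ m / (of_nat i)\<^sup>2 = 0"
      by (auto simp: pow_nth_below[OF UU0])
  qed (use assms in auto)
  also have "\<dots> = (\<Sum>n=1..m. (-1) ^ m * of_int (Delta n m) / fact m / (of_nat n)^2)"
    using False by (intro sum.cong refl) (simp add: UU_pow_nth)
  also have "\<dots> = LL $ m"
    using False unfolding LL_def cc_def
    by (simp add: sum_divide_distrib sum_distrib_left field_simps)
  finally show ?thesis ..
qed

lemma deriv_UU: "fps_deriv UU = fps_exp (-1)"
  by (simp add: UU_def) (metis fps_const_neg fps_const_1_eq_1 mult_minus_left mult_1 minus_minus)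

lemma exp_UU: "fps_exp (-1) * (fps_exp 1 - 1) = (UU :: complex fps)"
proof -
  have "fps_exp (-1) * fps_exp 1 = (fps_exp (-1 + 1) :: complex fps)"
    by (rule fps_exp_add_mult [symmetric])
  hence "fps_exp (-1) * fps_exp 1 = (1 :: complex fps)" by simp
  thus ?thesis by (simp add: UU_def algebra_simps)
qed

lemma dPP: "fps_deriv (PP M) * (fps_exp 1 - 1) = QQ M"
proof -
  have "fps_deriv (PP M) * (fps_exp 1 - 1) =
        (\<Sum>n=1..M. fps_const (1 / (of_nat n)^2) * (of_nat n * (fps_exp (-1) * (fps_exp 1 - 1)) * UU ^ (n - 1)))"
    by (simp add: PP_def fps_deriv_sum fps_deriv_power' deriv_UU sum_distrib_right sum_distrib_left mult_ac)
  also have "\<dots> = QQ M" unfolding QQ_def exp_UU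
  proof (intro sum.cong refl)
    fix n assume n: "n \<in> {1..M}"
    hence "UU * UU ^ (n - 1) = UU ^ n" by (cases n) auto
    moreover have "fps_const (1 / (of_nat n)^2) * (of_nat n :: complex fps) = fps_const (1 / of_nat n)"
      using n by (simp add: fps_of_nat [symmetric] power2_eq_square)
    ultimately show "fps_const (1 / (of_nat n)^2) * (of_nat n * UU * UU ^ (n - 1)) = fps_const (1 / of_nat n) * UU ^ n"
      by (metis mult.assoc)
  qed
  finally show ?thesis .
qed

lemma dQQ: "fps_deriv (QQ M) = 1 - UU ^ M"
proof -
  have "fps_deriv (QQ M) = (\<Sum>n=1..M. fps_const (1 / of_nat n) * (of_nat n * fps_exp (-1) * UU ^ (n - 1)))"
    by (simp add: QQ_def fps_deriv_sum fps_deriv_power' deriv_UU)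
  also have "\<dots> = (\<Sum>n=1..M. fps_exp (-1) * UU ^ (n - 1))"
  proof (intro sum.cong refl)
    fix n assume n: "n \<in> {1..M}"
    have "fps_const (1 / of_nat n) * (of_nat n :: complex fps) = 1"
      using n by (simp add: fps_of_nat [symmetric])
    thus "fps_const (1 / of_nat n) * (of_nat n * fps_exp (-1) * UU ^ (n - 1)) = fps_exp (-1) * UU ^ (n - 1)"
      by (metis mult.assoc mult_1)
  qed
  also have "\<dots> = fps_exp (-1) * (\<Sum>i<M. UU ^ i)"
    by (simp add: sum_distrib_left sum.atLeast1_atMost_eq)
  also have "fps_exp (-1) = 1 - UU" by (simp add: UU_def)
  finally show ?thesis by (simp add: one_diff_power_eq)
qed

lemma QQ_coeff: assumes "j \<le> M" shows "QQ M $ j = fps_X $ j"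
proof (cases j)
  case 0 thus ?thesis by (simp add: QQ_def fps_sum_nth pow_nth_below[OF UU0])
next
  case (Suc i)
  have "fps_deriv (QQ M) $ i = (1 - UU ^ M) $ i" by (simp add: dQQ)
  also have "\<dots> = (1 :: complex fps) $ i" using assms Suc by (simp add: pow_nth_below[OF UU0])
  finally have "of_nat (Suc i) * QQ M $ Suc i = (1::complex fps) $ i" by simp
  hence "QQ M $ Suc i = (1::complex fps) $ i / of_nat (Suc i)"
    by (simp add: field_simps del: of_nat_Suc)
  thus ?thesis using Suc by (cases i) auto
qed

lemma CC_mult: "CC * (fps_exp 1 - 1) = fps_X"
proof (rule fps_ext)
  fix j
  have "(CC * (fps_exp 1 - 1)) $ j = (\<Sum>i=0..j. CC $ i * (fps_exp 1 - 1) $ (j - i))"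
    by (rule fps_mult_nth)
  also have "\<dots> = (\<Sum>i=0..j. fps_deriv (PP (j+1)) $ i * (fps_exp 1 - 1) $ (j - i))"
  proof (intro sum.cong refl)
    fix i assume "i \<in> {0..j}"
    hence "LL $ Suc i = PP (j+1) $ Suc i" by (intro LL_PP) auto
    thus "CC $ i * (fps_exp 1 - 1) $ (j - i) = fps_deriv (PP (j+1)) $ i * (fps_exp 1 - 1) $ (j - i)"
      by (simp add: deriv_LL [symmetric] del: fps_deriv_nth) (simp add: fps_deriv_nth)
  qed
  also have "\<dots> = QQ (j+1) $ j" by (simp add: dPP [symmetric] fps_mult_nth)
  also have "\<dots> = fps_X $ j" by (rule QQ_coeff) simp
  finally show "(CC * (fps_exp 1 - 1)) $ j = fps_X $ j" .
qed

lemma sub1: "1 \<le> subdegree (fps_exp 1 - 1 :: complex fps)"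
proof (rule subdegree_geI)
  have "(fps_exp 1 - 1 :: complex fps) $ 1 \<noteq> 0" by simp
  thus "(fps_exp 1 - 1 :: complex fps) \<noteq> 0" by auto
qed simp

definition GG :: "complex fps" where "GG = fps_shift 1 (fps_exp 1 - 1)"

lemma GG_X: "GG * fps_X = fps_exp 1 - 1"
  unfolding GG_def by (rule fps_shift_times_fps_X) (rule sub1)

lemma inverse_GG: "inverse GG = CC"
proof (rule fps_inverse_unique)
  have "(GG * CC) * fps_X = CC * (GG * fps_X)" by (simp only: mult_ac)
  also have "\<dots> = 1 * fps_X" by (simp only: GG_X CC_mult mult_1)
  finally have "(GG * CC) * fps_X = 1 * fps_X" .
  thus "GG * CC = 1" by (rule mult_right_cancel [THEN iffD1, rotated]) simp
qed

lemma radius_E1: "fps_conv_radius (fps_exp 1 - 1 :: complex fps) = \<infinity>"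
  using fps_conv_radius_diff[of "fps_exp (1::complex)" 1] by simp

lemma eval_GG: "eval_fps GG z = (if z = 0 then 1 else (exp z - 1) / z)"
proof -
  have "eval_fps GG z = (if z = 0 then (fps_exp 1 - 1) $ 1 else eval_fps (fps_exp 1 - 1) z / z ^ 1)"
    unfolding GG_def by (rule eval_fps_shift[OF sub1]) (simp add: radius_E1)
  also have "eval_fps (fps_exp 1 - 1) z = exp z - 1"
    by (subst eval_fps_diff) auto
  finally show ?thesis by simp
qed

lemma GG_nz: assumes "ereal (norm z) < ereal (2 * pi)" shows "eval_fps GG z \<noteq> 0"
proof (cases "z = 0")
  case False
  have "exp z \<noteq> 1"
  proof
    assume "exp z = 1"
    then obtain n :: int where n: "Re z = 0" "Im z = of_int (2 * n) * pi" by (auto simp: exp_eq_1)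
    with False have "n \<noteq> 0" using complex_eq_iff by fastforce
    hence "1 \<le> \<bar>real_of_int n\<bar>" by linarith
    hence "2 * pi \<le> \<bar>Im z\<bar>" using n(2) pi_gt_zero by (simp add: abs_mult)
    also have "\<bar>Im z\<bar> \<le> norm z" by (rule abs_Im_le_cmod)
    finally show False using assms by simp
  qed
  thus ?thesis using False by (simp add: eval_GG)
qed (simp add: eval_GG)

lemma radius_CC: "ereal (2 * pi) \<le> fps_conv_radius CC"
proof -
  have "min (ereal (2*pi)) (fps_conv_radius GG) \<le> fps_conv_radius (inverse GG)"
    by (rule fps_conv_radius_inverse) (rule GG_nz)
  moreover have "fps_conv_radius GG = \<infinity>" by (simp add: GG_def radius_E1)
  ultimately show ?thesis by (simp add: inverse_GG)
qed

lemma eval_CC: assumes "norm z < 2 * pi" shows "eval_fps CC z = inverse (eval_fps GG z)"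
proof -
  have "eval_fps (inverse GG) z = inverse (eval_fps GG z)"
    by (rule eval_fps_inverse[where r = "ereal (2*pi)"]) (use assms GG_nz in \<open>auto simp: GG_def radius_E1\<close>)
  thus ?thesis by (simp add: inverse_GG)
qed

definition rc :: "nat \<Rightarrow> real" where
  "rc k = (-1) ^ (k+1) * (\<Sum>n=1..k+1. real_of_int (Delta n (k+1)) / (real n)^2)"

lemma cc_rc: "cc k = of_real (rc k)"
  by (simp add: cc_def rc_def)

lemma rc_sums:
  fixes t :: real
  assumes "t \<noteq> 0" "\<bar>t\<bar> < 2 * pi"
  shows "(\<lambda>k. rc k / fact k * t ^ k) sums (t / (exp t - 1))"
proof -
  define z where "z = complex_of_real t"
  have nz: "norm z < 2 * pi" using assms by (simp add: z_def)
  have "ereal (norm z) < fps_conv_radius CC"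
    by (rule less_le_trans[OF _ radius_CC]) (use nz in simp)
  from sums_eval_fps[OF this] have "(\<lambda>n. CC $ n * z ^ n) sums eval_fps CC z" .
  also have "eval_fps CC z = inverse (eval_fps GG z)" by (rule eval_CC[OF nz])
  also have "\<dots> = of_real (t / (exp t - 1))"
    using assms by (simp add: eval_GG z_def exp_of_real [symmetric])
  also have "(\<lambda>n. CC $ n * z ^ n) = (\<lambda>n. of_real (rc n / fact n * t ^ n))"
    by (simp add: CC_def cc_rc z_def)
  finally show ?thesis by (simp only: sums_of_real_iff)
qed

lemma powser_unique0:
  fixes a :: "nat \<Rightarrow> real"
  assumes s: "s > 0" and h: "\<And>x. x \<noteq> 0 \<Longrightarrow> \<bar>x\<bar> < s \<Longrightarrow> (\<lambda>n. a n * x ^ n) sums 0"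
  shows "a N = 0"
proof -
  have "(\<forall>x. x \<noteq> 0 \<longrightarrow> \<bar>x\<bar> < s \<longrightarrow> (\<lambda>n. a (n + N) * x ^ n) sums 0) \<and> a N = 0"
  proof (induction N)
    case 0
    have H: "\<forall>x. x \<noteq> 0 \<longrightarrow> \<bar>x\<bar> < s \<longrightarrow> (\<lambda>n. a (n + 0) * x ^ n) sums 0" using h by simp
    have "((\<lambda>x::real. 0) \<longlongrightarrow> a (0 + 0)) (at 0)"
      by (rule powser_limit_0_strong[OF s]) (use H in auto)
    hence "a 0 = 0" using LIM_const_eq by fastforce
    with H show ?case by simp
  next
    case (Suc N)
    have H: "\<forall>x. x \<noteq> 0 \<longrightarrow> \<bar>x\<bar> < s \<longrightarrow> (\<lambda>n. a (n + Suc N) * x ^ n) sums 0"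
    proof (intro allI impI)
      fix x :: real assume x: "x \<noteq> 0" "\<bar>x\<bar> < s"
      from Suc.IH x have "(\<lambda>n. a (n + N) * x ^ n) sums 0" by auto
      hence "(\<lambda>n. a (Suc n + N) * x ^ Suc n) sums (0 - a (0 + N) * x ^ 0)"
        by (subst sums_Suc_iff) simp
      hence "(\<lambda>n. a (Suc n + N) * x ^ Suc n) sums 0" using Suc.IH by simp
      hence "(\<lambda>n. a (Suc n + N) * x ^ Suc n / x) sums (0 / x)" by (rule sums_divide)
      thus "(\<lambda>n. a (n + Suc N) * x ^ n) sums 0" using x by simp
    qed
    have "((\<lambda>x::real. 0) \<longlongrightarrow> a (0 + Suc N)) (at 0)"
      by (rule powser_limit_0_strong[OF s]) (use H in auto)
    hence "a (Suc N) = 0" using LIM_const_eq by fastforce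
    with H show ?case by simp
  qed
  thus ?thesis by simp
qed

lemma bernoulli_seq_eq: "bernoulli_seq = rc"
  unfolding bernoulli_seq_def
proof (rule the_equality)
  show "\<forall>t::real. t \<noteq> 0 \<and> \<bar>t\<bar> < 2 * pi \<longrightarrow> (\<lambda>k. rc k / fact k * t ^ k) sums (t / (exp t - 1))"
    using rc_sums by blast
next
  fix b assume hb: "\<forall>t::real. t \<noteq> 0 \<and> \<bar>t\<bar> < 2 * pi \<longrightarrow> (\<lambda>k. b k / fact k * t ^ k) sums (t / (exp t - 1))"
  have "(b k - rc k) / fact k = 0" for k
  proof (rule powser_unique0[of "2*pi"])
    fix x :: real assume x: "x \<noteq> 0" "\<bar>x\<bar> < 2 * pi"
    have "(\<lambda>k. b k / fact k * x ^ k - rc k / fact k * x ^ k) sums (x / (exp x - 1) - x / (exp x - 1))"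
      by (intro sums_diff) (use hb rc_sums x in auto)
    thus "(\<lambda>n. (b n - rc n) / fact n * x ^ n) sums 0" by (simp add: diff_divide_distrib left_diff_distrib)
  qed simp
  thus "b = rc" by (intro ext) simp
qed

theorem mainTheorem2:
  fixes k :: nat
  shows "bernoulli k = (-1) ^ (k + 1) * (\<Sum>n=1..k+1. real_of_int (Delta n (k + 1)) / (real n)\<^sup>2)"
  by (simp add: bernoulli_def bernoulli_seq_eq rc_def)

end
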